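(* Let $f\colon X\to Y$ be a map between two simply-connected spaces. If $H_*(\Omega X;\mathbb Z)$ is torsion-free and $(\Omega f)_*\colon H_*(\Omega X;\mathbf k)\to H_*(\Omega Y;\mathbf k)$ is onto for every field $\mathbf k$, then $H_*(\Omega Y;\mathbb Z)$ is also torsion-free.
   Context: $\Omega$ denotes the based loop space functor and $\Omega f$ the induced map of loop spaces. *)

theory Defs
  imports "HOL-Homology.Homology" "HOL-Algebra.Ring"
begin

definition simply_connected_space :: "'a topology \<Rightarrow> bool" where
  "simply_connected_space X \<equiv>
     topspace X \<noteq> {} \<and> path_connected_space X \<and>
     (\<forall>g. pathin X g \<and> g 1 = g 0 \<longrightarrow>
        homotopic_with (\<lambda>h. h 1 = h 0) (top_of_set {0..1}) X g (\<lambda>_. g 0))"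

text \<open>Loops are represented canonically: they are constant at the base point
  outside the parameter interval [0,1].\<close>

definition loops :: "'a topology \<Rightarrow> 'a \<Rightarrow> (real \<Rightarrow> 'a) set" where
  "loops X x0 = {g. pathin X g \<and> g 0 = x0 \<and> g 1 = x0 \<and> (\<forall>t. t \<notin> {0..1} \<longrightarrow> g t = x0)}"

definition loop_space :: "'a topology \<Rightarrow> 'a \<Rightarrow> (real \<Rightarrow> 'a) topology" where
  "loop_space X x0 =
     subtopology
       (topology_generated_by {{g. g ` K \<subseteq> U} | K U. compact K \<and> K \<subseteq> {0..1} \<and> openin X U})
       (loops X x0)"

definition loop_map :: "('a \<Rightarrow> 'b) \<Rightarrow> (real \<Rightarrow> 'a) \<Rightarrow> (real \<Rightarrow> 'b)" where
  "loop_map f g = f \<circ> g"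

definition kchain :: "('k, 'm) ring_scheme \<Rightarrow> nat \<Rightarrow> 'a topology \<Rightarrow> (((nat \<Rightarrow> real) \<Rightarrow> 'a) \<Rightarrow> 'k) \<Rightarrow> bool" where
  "kchain R p X c \<equiv> (\<forall>\<sigma>. c \<sigma> \<in> carrier R) \<and> finite {\<sigma>. c \<sigma> \<noteq> \<zero>\<^bsub>R\<^esub>}
      \<and> (\<forall>\<sigma>. c \<sigma> \<noteq> \<zero>\<^bsub>R\<^esub> \<longrightarrow> singular_simplex p X \<sigma>)"

definition kboundary :: "('k, 'm) ring_scheme \<Rightarrow> nat \<Rightarrow> (((nat \<Rightarrow> real) \<Rightarrow> 'a) \<Rightarrow> 'k) \<Rightarrow> (((nat \<Rightarrow> real) \<Rightarrow> 'a) \<Rightarrow> 'k)" where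
  "kboundary R p c \<tau> =
     (if p = 0 then \<zero>\<^bsub>R\<^esub> else
      finsum R (\<lambda>(\<sigma>, k). ((\<ominus>\<^bsub>R\<^esub> \<one>\<^bsub>R\<^esub>) [^]\<^bsub>R\<^esub> k) \<otimes>\<^bsub>R\<^esub> c \<sigma>)
        {(\<sigma>, k). c \<sigma> \<noteq> \<zero>\<^bsub>R\<^esub> \<and> k \<le> p \<and> singular_face p k \<sigma> = \<tau>})"

definition kcycle :: "('k, 'm) ring_scheme \<Rightarrow> nat \<Rightarrow> 'a topology \<Rightarrow> (((nat \<Rightarrow> real) \<Rightarrow> 'a) \<Rightarrow> 'k) \<Rightarrow> bool" where
  "kcycle R p X c \<equiv> kchain R p X c \<and> kboundary R p c = (\<lambda>_. \<zero>\<^bsub>R\<^esub>)"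

definition kbounding :: "('k, 'm) ring_scheme \<Rightarrow> nat \<Rightarrow> 'a topology \<Rightarrow> (((nat \<Rightarrow> real) \<Rightarrow> 'a) \<Rightarrow> 'k) \<Rightarrow> bool" where
  "kbounding R p X c \<equiv> \<exists>d. kchain R (Suc p) X d \<and> kboundary R (Suc p) d = c"

definition kchain_map :: "('k, 'm) ring_scheme \<Rightarrow> nat \<Rightarrow> ('a \<Rightarrow> 'b) \<Rightarrow> (((nat \<Rightarrow> real) \<Rightarrow> 'a) \<Rightarrow> 'k)
     \<Rightarrow> (((nat \<Rightarrow> real) \<Rightarrow> 'b) \<Rightarrow> 'k)" where
  "kchain_map R p g c \<tau> = finsum R c {\<sigma>. c \<sigma> \<noteq> \<zero>\<^bsub>R\<^esub> \<and> simplex_map p g \<sigma> = \<tau>}"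

definition kinduced_onto :: "('k, 'm) ring_scheme \<Rightarrow> nat \<Rightarrow> 'a topology \<Rightarrow> 'b topology \<Rightarrow> ('a \<Rightarrow> 'b) \<Rightarrow> bool" where
  "kinduced_onto R p X Y g \<equiv>
     \<forall>z. kcycle R p Y z \<longrightarrow>
       (\<exists>w. kcycle R p X w \<and> kbounding R p Y (\<lambda>\<tau>. z \<tau> \<ominus>\<^bsub>R\<^esub> kchain_map R p g w \<tau>))"

definition torsion_free_group :: "('g, 'm) monoid_scheme \<Rightarrow> bool" where
  "torsion_free_group G \<equiv>
     \<forall>a \<in> carrier G. \<forall>n::nat. n > 0 \<and> a [^]\<^bsub>G\<^esub> n = \<one>\<^bsub>G\<^esub> \<longrightarrow> a = \<one>\<^bsub>G\<^esub>"

end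

theory Submission imports Defs "HOL-Algebra.IntRing" "HOL-Number_Theory.Residues" begin

definition ZP :: "nat \<Rightarrow> nat ring" where
  "ZP p = \<lparr>carrier = {..<p}, monoid.mult = (\<lambda>a b. (a*b) mod p), one = 1, zero = 0, add = (\<lambda>a b. (a+b) mod p)\<rparr>"

definition hz :: "nat \<Rightarrow> int \<Rightarrow> nat" where "hz p k = nat (k mod int p)"

lemma ZP_zero [simp]: "zero (ZP p) = 0" by (simp add: ZP_def)

lemma ZP_simps:  "carrier (ZP p) = {..<p}" "monoid.mult (ZP p) a b = (a*b) mod p" "one (ZP p) = 1"
  "zero (ZP p) = 0" "add (ZP p) a b = (a+b) mod p"
  by (auto simp: ZP_def)

lemma field_ZP:
  assumes "prime p" shows "field (ZP p)"
proof -
  interpret R: residues_prime p "residue_ring (int p)"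
    using assms by unfold_locales auto
  have p1: "p > 1" using assms prime_gt_1_nat by blast
  have iso: "nat \<in> ring_iso (residue_ring (int p)) (ZP p)"
  proof (rule ring_iso_memI)
    fix x y assume x: "x \<in> carrier (residue_ring (int p))" and y: "y \<in> carrier (residue_ring (int p))"
    then have x0: "0 \<le> x" "x < int p" and y0: "0 \<le> y" "y < int p" by (auto simp: R.res_carrier_eq)
    show "nat x \<in> carrier (ZP p)" using x0 by (auto simp: ZP_simps)
    show "nat (x \<otimes>\<^bsub>residue_ring (int p)\<^esub> y) = nat x \<otimes>\<^bsub>ZP p\<^esub> nat y"
      using x0 y0 by (simp add: residue_ring_def nat_mod_distrib nat_mult_distrib ZP_simps)
    show "nat (x \<oplus>\<^bsub>residue_ring (int p)\<^esub> y) = nat x \<oplus>\<^bsub>ZP p\<^esub> nat y"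
      using x0 y0 by (simp add: residue_ring_def nat_mod_distrib nat_add_distrib ZP_simps)
  next
    show "nat \<one>\<^bsub>residue_ring (int p)\<^esub> = \<one>\<^bsub>ZP p\<^esub>" by (simp add: residue_ring_def ZP_simps)
  next
    show "bij_betw nat (carrier (residue_ring (int p))) (carrier (ZP p))"
      unfolding R.res_carrier_eq ZP_simps
      by (rule bij_betw_byWitness[where f'=int]) auto
  qed
  have "field ((ZP p) \<lparr>zero := nat \<zero>\<^bsub>residue_ring (int p)\<^esub>\<rparr>)"
    by (rule R.ring_iso_imp_img_field[OF iso])
  moreover have "(ZP p) \<lparr>zero := nat \<zero>\<^bsub>residue_ring (int p)\<^esub>\<rparr> = ZP p"
    by (simp add: residue_ring_def ZP_def)
  ultimately show ?thesis by simp
qed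

lemma hz_hom:
  assumes "prime p" shows "ring_hom_cring \<Z> (ZP p) (hz p)"
proof -
  have p1: "p > 1" using assms prime_gt_1_nat by blast
  interpret F: field "ZP p" using field_ZP[OF assms] .
  show ?thesis
  proof (rule ring_hom_cringI)
    show "cring \<Z>" by (rule int_is_cring)
    show "cring (ZP p)" by (rule F.cring_axioms)
    show "hz p \<in> ring_hom \<Z> (ZP p)"
    proof (rule ring_hom_memI)
      fix x y :: int
      have a: "int (hz p x) = x mod int p" and b: "int (hz p y) = y mod int p"
        using p1 by (auto simp: hz_def)
      have "x mod int p < int p" "0 \<le> x mod int p" using p1 by simp_all
      then show "hz p x \<in> carrier (ZP p)" by (simp add: hz_def nat_less_iff ZP_simps)
      show "hz p (x \<otimes>\<^bsub>\<Z>\<^esub> y) = hz p x \<otimes>\<^bsub>ZP p\<^esub> hz p y"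
      proof -
        have "int (hz p (x*y)) = int ((hz p x * hz p y) mod p)"
          using p1 by (simp add: hz_def of_nat_mod a b mod_mult_eq)
        then show ?thesis by (simp add: ZP_simps)
      qed
      show "hz p (x \<oplus>\<^bsub>\<Z>\<^esub> y) = hz p x \<oplus>\<^bsub>ZP p\<^esub> hz p y"
      proof -
        have "int (hz p (x+y)) = int ((hz p x + hz p y) mod p)"
          using p1 by (simp add: hz_def of_nat_mod a b mod_add_eq)
        then show ?thesis by (simp add: ZP_simps)
      qed
    next
      show "hz p \<one>\<^bsub>\<Z>\<^esub> = \<one>\<^bsub>ZP p\<^esub>" using p1 by (simp add: hz_def ZP_simps)
    qed
  qed
qed

locale prm = fixes p :: nat assumes prime: "prime p"
begin

abbreviation "R \<equiv> ZP p"

lemma p1: "p > 1" using prime prime_gt_1_nat by blast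

sublocale F: field R by (rule field_ZP[OF prime])
sublocale H: ring_hom_cring \<Z> R "hz p" by (rule hz_hom[OF prime])

lemma hz_carrier [simp]: "hz p k \<in> carrier R"
proof -
  have "k mod int p < int p" "0 \<le> k mod int p" using p1 by simp_all
  then show ?thesis by (simp add: hz_def nat_less_iff ZP_simps)
qed

lemma hz_lt: "hz p k < p" using hz_carrier by (simp add: ZP_simps)

lemma hz_0_iff: "hz p k = 0 \<longleftrightarrow> int p dvd k"
proof -
  have "0 \<le> k mod int p" using p1 by simp
  then show ?thesis by (auto simp: hz_def dvd_eq_mod_eq_0)
qed

lemma hz_0 [simp]: "hz p 0 = 0" by (simp add: hz_def)

lemma hz_of_nat: "n < p \<Longrightarrow> hz p (int n) = n"
  by (simp add: hz_def)

lemma hz_1: "hz p 1 = \<one>\<^bsub>R\<^esub>" using p1 by (simp add: hz_def ZP_simps)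

lemma hz_mult: "hz p (x * y) = hz p x \<otimes>\<^bsub>R\<^esub> hz p y"
  using H.hom_mult[of x y] by simp

lemma hz_add: "hz p (x + y) = hz p x \<oplus>\<^bsub>R\<^esub> hz p y"
  using H.hom_add[of x y] by simp

lemma hz_minus: "hz p (- x) = \<ominus>\<^bsub>R\<^esub> hz p x"
  using H.hom_a_inv[of x] by (simp add: int_a_inv_eq)

lemma hz_diff: "hz p (x - y) = hz p x \<ominus>\<^bsub>R\<^esub> hz p y"
  using hz_add[of x "-y"] hz_minus[of y] by (simp add: a_minus_def)

lemma hz_sum: "hz p (sum f A) = finsum R (\<lambda>i. hz p (f i)) A"
proof (induction A rule: infinite_finite_induct)
  case (infinite A) then show ?case by (simp add: F.finsum_infinite)
next
  case empty then show ?case by (simp add: F.finsum_empty)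
next
  case (insert x A)
  have "hz p (sum f (insert x A)) = hz p (f x) \<oplus>\<^bsub>R\<^esub> hz p (sum f A)"
    using insert by (simp add: hz_add)
  also have "\<dots> = finsum R (\<lambda>i. hz p (f i)) (insert x A)"
    using insert by (simp add: F.finsum_insert Pi_iff)
  finally show ?case .
qed

lemma hz_sign: "hz p ((-1) ^ k) = (\<ominus>\<^bsub>R\<^esub> \<one>\<^bsub>R\<^esub>) [^]\<^bsub>R\<^esub> k"
proof (induction k)
  case 0 then show ?case by (simp add: hz_1)
next
  case (Suc k)
  have "hz p ((-1) ^ Suc k) = hz p ((-1)^k * (-1))" by simp
  also have "\<dots> = hz p ((-1)^k) \<otimes>\<^bsub>R\<^esub> hz p (-1)" by (rule hz_mult)
  also have "hz p (-1) = \<ominus>\<^bsub>R\<^esub> \<one>\<^bsub>R\<^esub>" using hz_minus[of 1] by (simp add: hz_1)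
  finally show ?case using Suc by simp
qed

definition red :: "('x \<Rightarrow>\<^sub>0 int) \<Rightarrow> 'x \<Rightarrow> nat" where
  "red d = (\<lambda>\<sigma>. hz p (Poly_Mapping.lookup d \<sigma>))"

lemma red_carrier [simp]: "red d \<sigma> \<in> carrier R" by (simp add: red_def)

lemma red_nz: "red d \<sigma> \<noteq> 0 \<Longrightarrow> \<sigma> \<in> Poly_Mapping.keys d"
  by (auto simp: red_def in_keys_iff)

lemma red_add: "red (a + b) \<sigma> = red a \<sigma> \<oplus>\<^bsub>R\<^esub> red b \<sigma>"
  by (simp add: red_def lookup_add hz_add)

lemma red_diff: "red (a - b) \<sigma> = red a \<sigma> \<ominus>\<^bsub>R\<^esub> red b \<sigma>"
  by (simp add: red_def lookup_minus hz_diff)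

lemma red_cmul_p: "red (frag_cmul (int p) a) \<sigma> = 0"
  by (simp only: red_def lookup_frag_cmul hz_0_iff) simp

lemma kchain_red:
  assumes "singular_chain q X d" shows "kchain R q X (red d)"
proof -
  have fin: "finite {\<sigma>. red d \<sigma> \<noteq> 0}"
  proof (rule finite_subset)
    show "{\<sigma>. red d \<sigma> \<noteq> 0} \<subseteq> Poly_Mapping.keys d"
    proof
      fix x assume "x \<in> {\<sigma>. red d \<sigma> \<noteq> 0}"
      then have "red d x \<noteq> 0" by (rule CollectD)
      then show "x \<in> Poly_Mapping.keys d" by (rule red_nz)
    qed
  qed (rule finite_keys)
  have ss: "singular_simplex q X \<sigma>" if "red d \<sigma> \<noteq> 0" for \<sigma>
  proof -
    have k: "\<sigma> \<in> Poly_Mapping.keys d" by (rule red_nz[OF that])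
    have "Poly_Mapping.keys d \<subseteq> singular_simplex_set q X" using assms by (simp only: singular_chain_def)
    from subsetD[OF this k] show ?thesis by simp
  qed
  show ?thesis unfolding kchain_def ZP_zero by (intro conjI allI impI red_carrier fin ss)
qed

lemma lookup_chain_boundary:
  assumes "q > 0"
  shows "Poly_Mapping.lookup (chain_boundary q d) \<tau> =
    (\<Sum>(\<sigma>,k)\<in>{(\<sigma>,k). \<sigma> \<in> Poly_Mapping.keys d \<and> k \<le> q \<and> singular_face q k \<sigma> = \<tau>}. (-1)^k * Poly_Mapping.lookup d \<sigma>)"
proof -
  have "Poly_Mapping.lookup (chain_boundary q d) \<tau> =
     (\<Sum>\<sigma>\<in>Poly_Mapping.keys d. \<Sum>k\<le>q. (if singular_face q k \<sigma> = \<tau> then (-1)^k * Poly_Mapping.lookup d \<sigma> else 0))"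
    using assms
    by (simp add: chain_boundary_def frag_extend_def lookup_sum sum_distrib_left if_distrib mult_ac cong: if_cong)
       (auto intro!: sum.cong simp: mult.commute)
  also have "\<dots> = (\<Sum>x\<in>Poly_Mapping.keys d \<times> {..q}. (if singular_face q (snd x) (fst x) = \<tau> then (-1)^(snd x) * Poly_Mapping.lookup d (fst x) else 0))"
    by (simp add: sum.cartesian_product case_prod_beta)
  also have "\<dots> = (\<Sum>x\<in>{x\<in>Poly_Mapping.keys d \<times> {..q}. singular_face q (snd x) (fst x) = \<tau>}. (-1)^(snd x) * Poly_Mapping.lookup d (fst x))"
    by (rule sum.inter_filter[symmetric]) simp
  also have "{x\<in>Poly_Mapping.keys d \<times> {..q}. singular_face q (snd x) (fst x) = \<tau>} = {(\<sigma>,k). \<sigma> \<in> Poly_Mapping.keys d \<and> k \<le> q \<and> singular_face q k \<sigma> = \<tau>}"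
    by auto
  finally show ?thesis by (simp add: case_prod_beta)
qed

lemma lookup_chain_map:
  "Poly_Mapping.lookup (chain_map q g d) \<tau> =
    (\<Sum>\<sigma>\<in>{\<sigma>\<in>Poly_Mapping.keys d. simplex_map q g \<sigma> = \<tau>}. Poly_Mapping.lookup d \<sigma>)"
proof -
  have "Poly_Mapping.lookup (chain_map q g d) \<tau> =
     (\<Sum>\<sigma>\<in>Poly_Mapping.keys d. (if simplex_map q g \<sigma> = \<tau> then Poly_Mapping.lookup d \<sigma> else 0))"
    by (simp add: chain_map_def frag_extend_def lookup_sum if_distrib cong: if_cong)
       (auto intro!: sum.cong)
  also have "\<dots> = (\<Sum>\<sigma>\<in>{\<sigma>\<in>Poly_Mapping.keys d. simplex_map q g \<sigma> = \<tau>}. Poly_Mapping.lookup d \<sigma>)"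
    by (rule sum.inter_filter[symmetric]) simp
  finally show ?thesis .
qed

lemma red_chain_boundary:
  "red (chain_boundary q d) = kboundary R q (red d)"
proof
  fix \<tau>
  show "red (chain_boundary q d) \<tau> = kboundary R q (red d) \<tau>"
  proof (cases "q = 0")
    case True then show ?thesis by (simp add: red_def kboundary_def chain_boundary_def)
  next
    case False
    let ?J = "{(\<sigma>,k). \<sigma> \<in> Poly_Mapping.keys d \<and> k \<le> q \<and> singular_face q k \<sigma> = \<tau>}"
    let ?I = "{(\<sigma>,k). red d \<sigma> \<noteq> \<zero>\<^bsub>R\<^esub> \<and> k \<le> q \<and> singular_face q k \<sigma> = \<tau>}"
    let ?f = "\<lambda>(\<sigma>, k). ((\<ominus>\<^bsub>R\<^esub> \<one>\<^bsub>R\<^esub>) [^]\<^bsub>R\<^esub> k) \<otimes>\<^bsub>R\<^esub> red d \<sigma>"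
    have finJ: "finite ?J"
      by (rule finite_subset[of _ "Poly_Mapping.keys d \<times> {..q}"]) auto
    have "red (chain_boundary q d) \<tau> = finsum R (\<lambda>x. hz p ((-1)^(snd x) * Poly_Mapping.lookup d (fst x))) ?J"
      using False by (simp add: red_def lookup_chain_boundary hz_sum case_prod_beta)
    also have "\<dots> = finsum R ?f ?J"
      by (rule F.finsum_cong') (auto simp: hz_mult hz_sign red_def)
    also have "\<dots> = finsum R ?f ?I"
    proof (rule F.add.finprod_mono_neutral_cong_right)
      show "finite ?J" by (rule finJ)
      show "?I \<subseteq> ?J"
      proof
        fix x assume "x \<in> ?I"
        then obtain \<sigma> k where x: "x = (\<sigma>,k)" "red d \<sigma> \<noteq> 0" "k \<le> q" "singular_face q k \<sigma> = \<tau>" by auto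
        have "\<sigma> \<in> Poly_Mapping.keys d" by (rule red_nz) (rule x(2))
        with x show "x \<in> ?J" by simp
      qed
      show "?f i = \<zero>\<^bsub>R\<^esub>" if "i \<in> ?J - ?I" for i
        using that F.r_null[of "(\<ominus>\<^bsub>R\<^esub> \<one>\<^bsub>R\<^esub>) [^]\<^bsub>R\<^esub> snd i"] by (auto simp: case_prod_beta)
      show "?f \<in> ?J \<rightarrow> carrier R" by (auto intro!: F.m_closed F.nat_pow_closed)
    qed simp
    also have "\<dots> = kboundary R q (red d) \<tau>"
      using False by (simp add: kboundary_def)
    finally show ?thesis .
  qed
qed

lemma red_chain_map:
  "red (chain_map q g d) = kchain_map R q g (red d)"
proof
  fix \<tau>
  let ?J = "{\<sigma>\<in>Poly_Mapping.keys d. simplex_map q g \<sigma> = \<tau>}"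
  let ?I = "{\<sigma>. red d \<sigma> \<noteq> \<zero>\<^bsub>R\<^esub> \<and> simplex_map q g \<sigma> = \<tau>}"
  have "red (chain_map q g d) \<tau> = finsum R (red d) ?J"
    by (simp add: red_def lookup_chain_map hz_sum)
  also have "\<dots> = finsum R (red d) ?I"
  proof (rule F.add.finprod_mono_neutral_cong_right)
    show "finite ?J" by simp
    show "?I \<subseteq> ?J"
    proof
      fix x assume "x \<in> ?I"
      then have x: "red d x \<noteq> 0" "simplex_map q g x = \<tau>" by auto
      have "x \<in> Poly_Mapping.keys d" by (rule red_nz) (rule x(1))
      with x show "x \<in> ?J" by simp
    qed
    show "red d i = \<zero>\<^bsub>R\<^esub>" if "i \<in> ?J - ?I" for i using that by auto
    show "red d \<in> ?J \<rightarrow> carrier R" by auto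
  qed simp
  also have "\<dots> = kchain_map R q g (red d) \<tau>"
    by (simp add: kchain_map_def)
  finally show "red (chain_map q g d) \<tau> = kchain_map R q g (red d) \<tau>" .
qed


definition lift :: "('x \<Rightarrow> nat) \<Rightarrow> ('x \<Rightarrow>\<^sub>0 int)" where
  "lift w = Abs_poly_mapping (\<lambda>\<sigma>. int (w \<sigma>))"

lemma kchain_lift:
  assumes "kchain R q X w"
  shows "singular_chain q X (lift w)" "red (lift w) = w"
proof -
  have fin: "finite {\<sigma>. w \<sigma> \<noteq> 0}" using assms by (simp add: kchain_def)
  have lk: "Poly_Mapping.lookup (lift w) = (\<lambda>\<sigma>. int (w \<sigma>))"
    unfolding lift_def by (rule lookup_Abs_poly_mapping) (use fin in simp)
  show "singular_chain q X (lift w)"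
    using assms by (auto simp: singular_chain_def kchain_def in_keys_iff lk)
  have "w \<sigma> < p" for \<sigma> using assms by (auto simp: kchain_def ZP_simps)
  then show "red (lift w) = w"
    by (auto simp: red_def lk hz_of_nat)
qed

definition divp :: "('x \<Rightarrow>\<^sub>0 int) \<Rightarrow> ('x \<Rightarrow>\<^sub>0 int)" where
  "divp x = Abs_poly_mapping (\<lambda>\<sigma>. Poly_Mapping.lookup x \<sigma> div int p)"

lemma divp:
  assumes "\<And>\<sigma>. red x \<sigma> = 0"
  shows "x = frag_cmul (int p) (divp x)" "Poly_Mapping.keys (divp x) \<subseteq> Poly_Mapping.keys x"
proof -
  have fin: "finite {\<sigma>. Poly_Mapping.lookup x \<sigma> div int p \<noteq> 0}"
    by (rule finite_subset[of _ "Poly_Mapping.keys x"]) (auto simp: in_keys_iff)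
  have lk: "Poly_Mapping.lookup (divp x) = (\<lambda>\<sigma>. Poly_Mapping.lookup x \<sigma> div int p)"
    unfolding divp_def by (rule lookup_Abs_poly_mapping[OF fin])
  have dv: "int p dvd Poly_Mapping.lookup x \<sigma>" for \<sigma>
    using assms[of \<sigma>] by (simp add: red_def hz_0_iff)
  show "x = frag_cmul (int p) (divp x)"
    by (rule poly_mapping_eqI) (simp add: lk dv)
  show "Poly_Mapping.keys (divp x) \<subseteq> Poly_Mapping.keys x"
    by (auto simp: in_keys_iff lk)
qed

lemma cmul_cancel:
  assumes "frag_cmul (int p) a = frag_cmul (int p) b" shows "a = b"
proof (rule poly_mapping_eqI)
  fix \<sigma>
  have "int p * Poly_Mapping.lookup a \<sigma> = int p * Poly_Mapping.lookup b \<sigma>"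
    using arg_cong[OF assms, of "\<lambda>x. Poly_Mapping.lookup x \<sigma>"] by simp
  then show "Poly_Mapping.lookup a \<sigma> = Poly_Mapping.lookup b \<sigma>" using p1 by simp
qed

definition TFc :: "'x topology \<Rightarrow> nat \<Rightarrow> bool" where
  "TFc A m \<longleftrightarrow> (\<forall>V d. singular_chain m A V \<and> chain_boundary m V = 0 \<and> singular_chain (Suc m) A d
      \<and> chain_boundary (Suc m) d = frag_cmul (int p) V
      \<longrightarrow> (\<exists>U. singular_chain (Suc m) A U \<and> chain_boundary (Suc m) U = V))"

lemma lift_cycle:
  assumes tf: "TFc A m" and w: "kcycle R (Suc m) A w"
  shows "\<exists>W. singular_chain (Suc m) A W \<and> chain_boundary (Suc m) W = 0 \<and> red W = w"
proof -
  define W0 where "W0 = lift w"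
  have W0: "singular_chain (Suc m) A W0" "red W0 = w"
    using kchain_lift[of "Suc m" A w] w by (auto simp: kcycle_def W0_def)
  have rb: "red (chain_boundary (Suc m) W0) \<sigma> = 0" for \<sigma>
    using w W0 by (simp add: red_chain_boundary kcycle_def)
  define V where "V = divp (chain_boundary (Suc m) W0)"
  have bV: "chain_boundary (Suc m) W0 = frag_cmul (int p) V"
    unfolding V_def by (rule divp(1)) (rule rb)
  have scb: "singular_chain m A (chain_boundary (Suc m) W0)"
    using W0 singular_chain_boundary_alt by blast
  have V: "singular_chain m A V"
    using divp(2)[of "chain_boundary (Suc m) W0", OF rb] scb
    unfolding V_def singular_chain_def by blast
  have "frag_cmul (int p) (chain_boundary m V) = 0"
    using chain_boundary_boundary_alt[OF W0(1)] bV by (simp add: chain_boundary_cmul)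
  then have cV: "chain_boundary m V = 0" using p1 by simp
  obtain U where U: "singular_chain (Suc m) A U" "chain_boundary (Suc m) U = V"
    using tf V cV W0(1) bV unfolding TFc_def by blast
  define W where "W = W0 - frag_cmul (int p) U"
  have "singular_chain (Suc m) A W"
    unfolding W_def by (intro singular_chain_diff W0 singular_chain_cmul U)
  moreover have "chain_boundary (Suc m) W = 0"
    unfolding W_def by (simp add: chain_boundary_diff chain_boundary_cmul bV U)
  moreover have "red W = w"
  proof
    fix \<sigma>
    have "red W \<sigma> = w \<sigma> \<ominus>\<^bsub>R\<^esub> \<zero>\<^bsub>R\<^esub>"
      unfolding W_def red_diff red_cmul_p W0(2) by simp
    also have "\<dots> = w \<sigma>"
    proof -
      have "w \<sigma> \<in> carrier R" using w W0(2) red_carrier by metis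
      then show ?thesis by (simp only: a_minus_def F.minus_zero F.r_zero)
    qed
    finally show "red W \<sigma> = w \<sigma>" .
  qed
  ultimately show ?thesis by blast
qed

lemma main_chain:
  assumes tf: "TFc A m" and g: "continuous_map A B g"
    and hyp: "kinduced_onto R (Suc m) A B g"
    and c: "singular_chain m B c"
    and d: "singular_chain (Suc m) B d" "chain_boundary (Suc m) d = frag_cmul (int p) c"
  shows "\<exists>F. singular_chain (Suc m) B F \<and> chain_boundary (Suc m) F = c"
proof -
  define z where "z = red d"
  have "kboundary R (Suc m) z = (\<lambda>_. \<zero>\<^bsub>R\<^esub>)"
    unfolding z_def red_chain_boundary[symmetric] d(2) by (auto simp: red_cmul_p)
  then have "kcycle R (Suc m) B z"
    using kchain_red[OF d(1)] by (simp add: kcycle_def z_def)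
  then obtain w where w: "kcycle R (Suc m) A w"
    and bd: "kbounding R (Suc m) B (\<lambda>\<tau>. z \<tau> \<ominus>\<^bsub>R\<^esub> kchain_map R (Suc m) g w \<tau>)"
    using hyp unfolding kinduced_onto_def by blast
  obtain e where e: "kchain R (Suc (Suc m)) B e"
    "kboundary R (Suc (Suc m)) e = (\<lambda>\<tau>. z \<tau> \<ominus>\<^bsub>R\<^esub> kchain_map R (Suc m) g w \<tau>)"
    using bd unfolding kbounding_def by blast
  obtain W where W: "singular_chain (Suc m) A W" "chain_boundary (Suc m) W = 0" "red W = w"
    using lift_cycle[OF tf w] by blast
  define E where "E = lift e"
  have E: "singular_chain (Suc (Suc m)) B E" "red E = e"
    using kchain_lift[OF e(1)] by (auto simp: E_def)
  define X where "X = d - chain_map (Suc m) g W"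
  define G where "G = X - chain_boundary (Suc (Suc m)) E"
  have rX: "red X = red (chain_boundary (Suc (Suc m)) E)"
  proof
    fix \<tau>
    show "red X \<tau> = red (chain_boundary (Suc (Suc m)) E) \<tau>"
      unfolding X_def red_diff red_chain_map red_chain_boundary W(3) E(2) e(2) z_def ..
  qed
  have rG: "red G \<tau> = 0" for \<tau>
  proof -
    have "red G \<tau> = red X \<tau> \<ominus>\<^bsub>R\<^esub> red X \<tau>" unfolding G_def red_diff rX ..
    also have "\<dots> = \<zero>\<^bsub>R\<^esub>" by (simp only: a_minus_def F.r_neg red_carrier)
    finally show ?thesis by simp
  qed
  have sG: "singular_chain (Suc m) B G"
    unfolding G_def X_def
    by (intro singular_chain_diff d singular_chain_chain_map[OF W(1) g] singular_chain_boundary_alt E(1))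
  define F where "F = divp G"
  have GF: "G = frag_cmul (int p) F" unfolding F_def by (rule divp(1)[OF rG])
  have sF: "singular_chain (Suc m) B F"
    using divp(2)[of G, OF rG] sG unfolding F_def singular_chain_def by blast
  have "chain_boundary (Suc m) G = frag_cmul (int p) c"
    unfolding G_def X_def
    by (simp add: chain_boundary_diff d(2) chain_boundary_chain_map[OF W(1)] W(2)
        chain_boundary_boundary_alt[OF E(1)])
  then have "frag_cmul (int p) (chain_boundary (Suc m) F) = frag_cmul (int p) c"
    by (simp add: GF chain_boundary_cmul)
  then have "chain_boundary (Suc m) F = c" by (rule cmul_cancel)
  with sF show ?thesis by blast
qed

end

lemma class_add:
  "homologous_rel_set m X {} a \<otimes>\<^bsub>homology_group (int m) X\<^esub> homologous_rel_set m X {} b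
   = homologous_rel_set m X {} (a + b)"
proof -
  have "(\<Union>r\<in>homologous_rel_set m X {} a. \<Union>s\<in>homologous_rel_set m X {} b. {r + s})
        = homologous_rel_set m X {} (a + b)"
  proof (intro equalityI subsetI)
    fix x assume "x \<in> (\<Union>r\<in>homologous_rel_set m X {} a. \<Union>s\<in>homologous_rel_set m X {} b. {r + s})"
    then obtain r s where "homologous_rel m X {} a r" "homologous_rel m X {} b s" "x = r + s" by auto
    then show "x \<in> homologous_rel_set m X {} (a + b)"
      unfolding homologous_rel_def
      by (metis (no_types, lifting) add_diff_add mem_Collect_eq singular_relboundary_add)
  next
    fix x assume "x \<in> homologous_rel_set m X {} (a + b)"
    then have h: "singular_relboundary m X {} (a + b - x)" by (simp add: homologous_rel_def)
    have "homologous_rel m X {} a (x - b)"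
      unfolding homologous_rel_def using h by (simp add: algebra_simps)
    moreover have "homologous_rel m X {} b b" by (simp add: homologous_rel_def)
    ultimately show "x \<in> (\<Union>r\<in>homologous_rel_set m X {} a. \<Union>s\<in>homologous_rel_set m X {} b. {r + s})"
      by force
  qed
  then show ?thesis by (simp add: mult_relative_homology_group)
qed

lemma class_pow:
  "homologous_rel_set m X {} c [^]\<^bsub>homology_group (int m) X\<^esub> (n::nat)
   = homologous_rel_set m X {} (frag_cmul (int n) c)"
proof (induction n)
  case 0
  have "homologous_rel_set m X {} 0 = singular_relboundary_set m X {}"
    by (auto simp: homologous_rel_def singular_relboundary_minus)
  then show ?case by simp
next
  case (Suc n)
  then show ?case
    by (simp add: class_add frag_cmul_distrib add.commute)
qed

lemma class_one_iff:
  "homologous_rel_set m X {} c = \<one>\<^bsub>homology_group (int m) X\<^esub> \<longleftrightarrow> singular_relboundary m X {} c"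
  by (simp add: homologous_rel_set_eq_relboundary)

lemma (in prm) TFc_from:
  assumes "torsion_free_group (homology_group (int m) A)"
  shows "TFc A m"
  unfolding TFc_def
proof (intro allI impI, elim conjE)
  fix V d
  assume V: "singular_chain m A V" "chain_boundary m V = 0"
    and d: "singular_chain (Suc m) A d" "chain_boundary (Suc m) d = frag_cmul (int p) V"
  have car: "homologous_rel_set m A {} V \<in> carrier (homology_group (int m) A)"
    unfolding carrier_relative_homology_group using V by (auto simp: singular_cycle)
  have "homologous_rel_set m A {} V [^]\<^bsub>homology_group (int m) A\<^esub> p = \<one>\<^bsub>homology_group (int m) A\<^esub>"
    unfolding class_pow class_one_iff singular_boundary using d by blast
  moreover have "0 < p" using p1 by simp
  moreover have "\<forall>a \<in> carrier (homology_group (int m) A). \<forall>n::nat. n > 0 \<and> a [^]\<^bsub>homology_group (int m) A\<^esub> n = \<one>\<^bsub>homology_group (int m) A\<^esub> \<longrightarrow> a = \<one>\<^bsub>homology_group (int m) A\<^esub>"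
    using assms unfolding torsion_free_group_def .
  ultimately have "homologous_rel_set m A {} V = \<one>\<^bsub>homology_group (int m) A\<^esub>"
    using car by blast
  then show "\<exists>U. singular_chain (Suc m) A U \<and> chain_boundary (Suc m) U = V"
    unfolding class_one_iff singular_boundary .
qed

lemma tf_from_primes:
  assumes G: "group G"
    and P: "\<And>a p. a \<in> carrier G \<Longrightarrow> prime (p::nat) \<Longrightarrow> a [^]\<^bsub>G\<^esub> p = \<one>\<^bsub>G\<^esub> \<Longrightarrow> a = \<one>\<^bsub>G\<^esub>"
  shows "torsion_free_group G"
proof -
  interpret group G by (rule G)
  have "\<forall>a\<in>carrier G. a [^]\<^bsub>G\<^esub> n = \<one>\<^bsub>G\<^esub> \<longrightarrow> a = \<one>\<^bsub>G\<^esub>" if "n > 0" for n :: nat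
    using that
  proof (induction n rule: less_induct)
    case (less n)
    show ?case
    proof (cases "n = 1")
      case True then show ?thesis by simp
    next
      case False
      then obtain q where q: "prime q" "q dvd n"
        using less.prems prime_factor_nat by (metis Suc_lessI not_less0 One_nat_def less_one)
      then obtain k where k: "n = k * q" by (metis dvd_def mult.commute)
      have q1: "q > 1" using q(1) prime_gt_1_nat by blast
      have k0: "k > 0" using k less.prems by (cases k) auto
      have kn: "k < n" using k q1 k0 by simp
      show ?thesis
      proof (intro ballI impI)
        fix a assume a: "a \<in> carrier G" "a [^]\<^bsub>G\<^esub> n = \<one>\<^bsub>G\<^esub>"
        have "(a [^]\<^bsub>G\<^esub> k) [^]\<^bsub>G\<^esub> q = \<one>\<^bsub>G\<^esub>" using a by (simp add: nat_pow_pow k)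
        then have "a [^]\<^bsub>G\<^esub> k = \<one>\<^bsub>G\<^esub>" using P[of "a [^]\<^bsub>G\<^esub> k" q] a(1) q(1) by simp
        then show "a = \<one>\<^bsub>G\<^esub>" using less.IH[OF kn k0] a(1) by blast
      qed
    qed
  qed
  then show ?thesis unfolding torsion_free_group_def by blast
qed

lemma topspace_loop_space: "topspace (loop_space X x0) = loops X x0"
proof -
  have "UNIV \<in> {{g. g ` K \<subseteq> U} | K U. compact K \<and> K \<subseteq> {0..1} \<and> openin X U}"
    by (rule CollectI, rule exI[of _ "{}"], rule exI[of _ "{}"]) auto
  then have "\<Union>{{g::real\<Rightarrow>'a. g ` K \<subseteq> U} | K U. compact K \<and> K \<subseteq> {0..1} \<and> openin X U} = UNIV"
    by blast
  then show ?thesis by (simp add: loop_space_def)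
qed

lemma loops_image_topspace:
  assumes "g \<in> loops X x0" "K \<subseteq> {0..1}" shows "g ` K \<subseteq> topspace X"
  using assms by (auto simp: loops_def pathin_def continuous_map_def)

lemma continuous_loop_map:
  assumes f: "continuous_map X Y f"
  shows "continuous_map (loop_space X x0) (loop_space Y (f x0)) (loop_map f)"
proof -
  let ?SY = "{{g. g ` K \<subseteq> U} | K U. compact K \<and> K \<subseteq> {0..1} \<and> openin Y U}"
  let ?SX = "{{g. g ` K \<subseteq> U} | K U. compact K \<and> K \<subseteq> {0..1} \<and> openin X U}"
  have inl: "loop_map f g \<in> loops Y (f x0)" if "g \<in> loops X x0" for g
    using that f by (auto simp: loops_def loop_map_def pathin_def intro: continuous_map_compose)
  have pre: "openin (loop_space X x0) {g \<in> loops X x0. loop_map f g \<in> V}"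
    if "generate_topology_on ?SY V" for V
    using that
  proof (induction rule: generate_topology_on.induct)
    case Empty then show ?case by simp
  next
    case (Int a b)
    have "{g \<in> loops X x0. loop_map f g \<in> a \<inter> b} =
          {g \<in> loops X x0. loop_map f g \<in> a} \<inter> {g \<in> loops X x0. loop_map f g \<in> b}" by blast
    then show ?case using Int by (simp add: openin_Int)
  next
    case (UN K)
    have "{g \<in> loops X x0. loop_map f g \<in> \<Union>K} = \<Union>((\<lambda>k. {g \<in> loops X x0. loop_map f g \<in> k}) ` K)" by blast
    then show ?case using UN by (auto intro!: openin_Union)
  next
    case (Basis s)
    then obtain K U where s: "s = {g. g ` K \<subseteq> U}" "compact K" "K \<subseteq> {0..1}" "openin Y U" by blast
    define W where "W = {x \<in> topspace X. f x \<in> U}"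
    have oW: "openin X W" unfolding W_def using f s(4) by (rule openin_continuous_map_preimage)
    have eq: "{g \<in> loops X x0. loop_map f g \<in> s} = loops X x0 \<inter> {g. g ` K \<subseteq> W}"
    proof (intro equalityI subsetI)
      fix g assume "g \<in> {g \<in> loops X x0. loop_map f g \<in> s}"
      then have g: "g \<in> loops X x0" "(f \<circ> g) ` K \<subseteq> U" by (auto simp: s(1) loop_map_def)
      have "g ` K \<subseteq> topspace X" by (rule loops_image_topspace[OF g(1) s(3)])
      with g show "g \<in> loops X x0 \<inter> {g. g ` K \<subseteq> W}" by (auto simp: W_def)
    next
      fix g assume "g \<in> loops X x0 \<inter> {g. g ` K \<subseteq> W}"
      then show "g \<in> {g \<in> loops X x0. loop_map f g \<in> s}" by (auto simp: s(1) W_def loop_map_def)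
    qed
    have "openin (topology_generated_by ?SX) {g. g ` K \<subseteq> W}"
      by (rule topology_generated_by_Basis) (use s oW in blast)
    then show ?case unfolding eq loop_space_def by (auto simp: openin_subtopology)
  qed
  show ?thesis
    unfolding continuous_map_def topspace_loop_space
  proof (intro conjI allI impI)
    show "loop_map f \<in> loops X x0 \<rightarrow> loops Y (f x0)" using inl by blast
  next
    fix U assume "openin (loop_space Y (f x0)) U"
    then obtain V where V: "openin (topology_generated_by ?SY) V" "U = V \<inter> loops Y (f x0)"
      unfolding loop_space_def openin_subtopology by blast
    have "{x \<in> loops X x0. loop_map f x \<in> U} = {g \<in> loops X x0. loop_map f g \<in> V}"
      using inl V(2) by blast
    then show "openin (loop_space X x0) {x \<in> loops X x0. loop_map f x \<in> U}"
      using pre[OF openin_topology_generated_by[OF V(1)]] by simp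
  qed
qed

theorem mainTheorem8:
  fixes X :: "'a topology" and Y :: "'b topology" and f :: "'a \<Rightarrow> 'b" and x0 :: 'a
  assumes "simply_connected_space X" and "simply_connected_space Y"
    and "continuous_map X Y f" and "x0 \<in> topspace X"
    and "\<forall>p. torsion_free_group (homology_group p (loop_space X x0))"
    and "\<forall>(R :: nat ring) n. field R \<longrightarrow>
           kinduced_onto R n (loop_space X x0) (loop_space Y (f x0)) (loop_map f)"
  shows "\<forall>p. torsion_free_group (homology_group p (loop_space Y (f x0)))"
proof
  fix q :: int
  let ?A = "loop_space X x0" and ?B = "loop_space Y (f x0)"
  have g: "continuous_map ?A ?B (loop_map f)" by (rule continuous_loop_map[OF assms(3)])
  show "torsion_free_group (homology_group q ?B)"
  proof (cases "q < 0")
    case True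
    then have "trivial_group (homology_group q ?B)" by simp
    then show ?thesis unfolding torsion_free_group_def trivial_group_def by auto
  next
    case False
    then obtain m where qm: "q = int m" by (metis nonneg_int_cases not_less)
    show ?thesis unfolding qm
    proof (rule tf_from_primes)
      show "group (homology_group (int m) ?B)" by simp
    next
      fix a and p :: nat
      assume a: "a \<in> carrier (homology_group (int m) ?B)" and p: "prime p"
        and ap: "a [^]\<^bsub>homology_group (int m) ?B\<^esub> p = \<one>\<^bsub>homology_group (int m) ?B\<^esub>"
      interpret P: prm p by unfold_locales (rule p)
      obtain c where c: "a = homologous_rel_set m ?B {} c" "singular_relcycle m ?B {} c"
        using a unfolding carrier_relative_homology_group by blast
      have "singular_relboundary m ?B {} (frag_cmul (int p) c)"
        using ap unfolding c(1) class_pow class_one_iff .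
      then obtain d where d: "singular_chain (Suc m) ?B d" "chain_boundary (Suc m) d = frag_cmul (int p) c"
        unfolding singular_boundary by blast
      have tf: "P.TFc ?A m" by (rule P.TFc_from) (use assms(5) in blast)
      have hyp: "kinduced_onto (ZP p) (Suc m) ?A ?B (loop_map f)"
        using assms(6) field_ZP[OF p] by blast
      obtain F where "singular_chain (Suc m) ?B F" "chain_boundary (Suc m) F = c"
        using P.main_chain[OF tf g hyp _ d] c(2) by (auto simp: singular_cycle)
      then have "singular_relboundary m ?B {} c" unfolding singular_boundary by blast
      then show "a = \<one>\<^bsub>homology_group (int m) ?B\<^esub>" unfolding c(1) class_one_iff .
    qed
  qed
qed

end
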